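(* For any $\nu,\nu'\in\mathcal{M}(\mathbb{S}^{d-1})$ with Jordan decompositions $\nu=\nu_+-\nu_-$, $\nu'=\nu'_+-\nu'_-$, $$\sup_{x\in\mathbb{S}^{d-1}}|f(x;\nu)-f(x;\nu')|\le2\sqrt2\max\{\widetilde W_2(\nu_+,\nu'_+),\ \widetilde W_2(\nu_-,\nu'_-)\}.$$
   Context: $\sigma(u)=\max\{u,0\}$, $f(x;\nu)=\int_{\mathbb{S}^{d-1}}\sigma(\langle\theta,x\rangle)d\nu(\theta)$. On $\mathbb{R}_+\times\mathbb{S}^{d-1}$ use the cone metric $\widetilde{\mathrm{dist}}((r_1,\theta_1),(r_2,\theta_2))^2=(r_1-r_2)^2+2r_1r_2(1-\langle\theta_1,\theta_2\rangle)$, and let $W_2$ be the 2-Wasserstein distance w.r.t. it on $\mathcal{P}_2(\mathbb{R}_+\times\mathbb{S}^{d-1})$. The homogeneous projection $\mathsf h\mu\in\mathcal{M}_+(\mathbb{S}^{d-1})$ of $\mu$ is defined by $\int\phi\,d(\mathsf h\mu)=\int r\phi(\theta)\,d\mu(r,\theta)$ for continuous $\phi$. For nonnegative measures $\nu_1,\nu_2$: $\widetilde W_2(\nu_1,\nu_2)=\inf\{W_2(\mu_1,\mu_2):\mu_1,\mu_2\in\mathcal{P}_2(\mathbb{R}_+\times\mathbb{S}^{d-1}),\ \mathsf h\mu_1=\nu_1,\ \mathsf h\mu_2=\nu_2\}$. *)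

theory Defs
  imports "HOL-Probability.Probability"
begin

definition relu :: "real \<Rightarrow> real" where
  "relu u = max u 0"

text \<open>A finite nonnegative Borel measure on the unit sphere S^{d-1} of 'a
  (represented as a measure on the whole space concentrated on the sphere).\<close>
definition sphere_measure :: "'a::euclidean_space measure \<Rightarrow> bool" where
  "sphere_measure \<nu> \<longleftrightarrow> sets \<nu> = sets borel \<and> finite_measure \<nu> \<and>
     emeasure \<nu> (UNIV - sphere 0 1) = 0"

text \<open>Jordan decomposition: a finite signed measure nu = nu_plus - nu_minus
  with nu_plus, nu_minus nonnegative and mutually singular.\<close>
definition jordan_pair :: "'a::euclidean_space measure \<Rightarrow> 'a measure \<Rightarrow> bool" where
  "jordan_pair \<nu>p \<nu>m \<longleftrightarrow> sphere_measure \<nu>p \<and> sphere_measure \<nu>m \<and>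
     (\<exists>A \<in> sets borel. emeasure \<nu>p (UNIV - A) = 0 \<and> emeasure \<nu>m A = 0)"

definition f_pos :: "'a::euclidean_space measure \<Rightarrow> 'a \<Rightarrow> real" where
  "f_pos \<nu> x = (\<integral>\<theta>. relu (inner \<theta> x) \<partial>\<nu>)"

definition f_signed :: "'a::euclidean_space measure \<Rightarrow> 'a measure \<Rightarrow> 'a \<Rightarrow> real" where
  "f_signed \<nu>p \<nu>m x = f_pos \<nu>p x - f_pos \<nu>m x"

definition cone_dist_sq :: "real \<times> 'a::euclidean_space \<Rightarrow> real \<times> 'a \<Rightarrow> real" where
  "cone_dist_sq p q = (fst p - fst q)^2 + 2 * fst p * fst q * (1 - inner (snd p) (snd q))"

text \<open>P_2(R_+ x S^{d-1}): Borel probability measures on the cone with finite second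
  moment (the second moment w.r.t. the cone metric is the integral of r^2).\<close>
definition P2cone :: "(real \<times> 'a::euclidean_space) measure \<Rightarrow> bool" where
  "P2cone \<mu> \<longleftrightarrow> sets \<mu> = sets borel \<and> prob_space \<mu> \<and>
     emeasure \<mu> (UNIV - ({0..} \<times> sphere 0 1)) = 0 \<and>
     (\<integral>\<^sup>+ p. ennreal ((fst p)^2) \<partial>\<mu>) < \<infinity>"

definition couplings :: "(real \<times> 'a::euclidean_space) measure \<Rightarrow> (real \<times> 'a) measure
    \<Rightarrow> ((real \<times> 'a) \<times> (real \<times> 'a)) measure set" where
  "couplings \<mu>1 \<mu>2 = {\<pi>. sets \<pi> = sets borel \<and> prob_space \<pi> \<and>
     distr \<pi> borel fst = \<mu>1 \<and> distr \<pi> borel snd = \<mu>2}"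

definition ennsqrt :: "ennreal \<Rightarrow> ennreal" where
  "ennsqrt c = (if c = \<infinity> then \<infinity> else ennreal (sqrt (enn2real c)))"

definition W2 :: "(real \<times> 'a::euclidean_space) measure \<Rightarrow> (real \<times> 'a) measure \<Rightarrow> ennreal" where
  "W2 \<mu>1 \<mu>2 = (INF \<pi> \<in> couplings \<mu>1 \<mu>2.
      ennsqrt (\<integral>\<^sup>+ z. ennreal (cone_dist_sq (fst z) (snd z)) \<partial>\<pi>))"

definition hproj_eq :: "(real \<times> 'a::euclidean_space) measure \<Rightarrow> 'a measure \<Rightarrow> bool" where
  "hproj_eq \<mu> \<nu> \<longleftrightarrow> (\<forall>\<phi> :: 'a \<Rightarrow> real. continuous_on (sphere 0 1) \<phi> \<longrightarrow>
      (\<integral>\<theta>. \<phi> \<theta> \<partial>\<nu>) = (\<integral>p. fst p * \<phi> (snd p) \<partial>\<mu>))"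

definition W2tilde :: "'a::euclidean_space measure \<Rightarrow> 'a measure \<Rightarrow> ennreal" where
  "W2tilde \<nu>1 \<nu>2 = (INF \<mu>\<mu> \<in> {(\<mu>1, \<mu>2). P2cone \<mu>1 \<and> P2cone \<mu>2 \<and>
      hproj_eq \<mu>1 \<nu>1 \<and> hproj_eq \<mu>2 \<nu>2}. W2 (fst \<mu>\<mu>) (snd \<mu>\<mu>))"

end

theory Submission
  imports Defs
begin

lemma relu_scale: "r \<ge> 0 \<Longrightarrow> r * relu a = relu (r * a)"
  unfolding relu_def by (simp add: max_def mult_le_0_iff)

lemma relu_lip: "\<bar>relu a - relu b\<bar> \<le> \<bar>a - b\<bar>"
  unfolding relu_def by (simp add: max_def)

lemma pw:
  fixes t1 t2 x :: "'a::euclidean_space"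
  assumes "r1 \<ge> 0" "r2 \<ge> 0" "norm t1 = 1" "norm t2 = 1" "norm x = 1"
  shows "(r1 * relu (inner t1 x) - r2 * relu (inner t2 x))\<^sup>2 \<le> cone_dist_sq (r1, t1) (r2, t2)"
proof -
  have "\<bar>r1 * relu (inner t1 x) - r2 * relu (inner t2 x)\<bar> = \<bar>relu (inner (r1 *\<^sub>R t1) x) - relu (inner (r2 *\<^sub>R t2) x)\<bar>"
    using assms by (simp add: relu_scale)
  also have "\<dots> \<le> \<bar>inner (r1 *\<^sub>R t1) x - inner (r2 *\<^sub>R t2) x\<bar>" by (rule relu_lip)
  also have "\<dots> = \<bar>inner (r1 *\<^sub>R t1 - r2 *\<^sub>R t2) x\<bar>" by (simp add: inner_diff_left)
  also have "\<dots> \<le> norm (r1 *\<^sub>R t1 - r2 *\<^sub>R t2) * norm x" by (rule Cauchy_Schwarz_ineq2)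
  finally have a: "\<bar>r1 * relu (inner t1 x) - r2 * relu (inner t2 x)\<bar> \<le> norm (r1 *\<^sub>R t1 - r2 *\<^sub>R t2)"
    using assms by simp
  have "(norm (r1 *\<^sub>R t1 - r2 *\<^sub>R t2))\<^sup>2 = r1\<^sup>2 * (norm t1)\<^sup>2 + r2\<^sup>2 * (norm t2)\<^sup>2 - 2 * r1 * r2 * inner t1 t2"
    unfolding power2_norm_eq_inner by (simp add: inner_diff_left inner_diff_right algebra_simps inner_commute power2_eq_square)
  also have "\<dots> = cone_dist_sq (r1, t1) (r2, t2)"
    using assms by (simp add: cone_dist_sq_def power2_eq_square algebra_simps)
  finally have b: "(norm (r1 *\<^sub>R t1 - r2 *\<^sub>R t2))\<^sup>2 = cone_dist_sq (r1, t1) (r2, t2)" .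
  have "(r1 * relu (inner t1 x) - r2 * relu (inner t2 x))\<^sup>2 \<le> (norm (r1 *\<^sub>R t1 - r2 *\<^sub>R t2))\<^sup>2"
    using a by (metis abs_ge_zero power2_abs power_mono)
  with b show ?thesis by simp
qed

lemma supp_AE:
  assumes "P2cone (\<mu> :: (real \<times> 'a::euclidean_space) measure)"
  shows "AE p in \<mu>. p \<in> {0..} \<times> sphere (0::'a) 1"
proof (rule AE_I')
  have sets: "sets \<mu> = sets borel" using assms by (simp add: P2cone_def)
  have cl: "closed ({0::real..} \<times> sphere (0::'a) 1)"
    by (intro closed_Times closed_atLeast closed_sphere)
  have "UNIV - ({0::real..} \<times> sphere (0::'a) 1) \<in> sets borel"
    using cl by (intro borel_open) (simp add: open_Diff)
  then show "UNIV - ({0::real..} \<times> sphere (0::'a) 1) \<in> null_sets \<mu>"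
    using assms sets by (intro null_setsI) (auto simp: P2cone_def)
  show "{x \<in> space \<mu>. x \<notin> {0..} \<times> sphere 0 1} \<subseteq> UNIV - ({0::real..} \<times> sphere (0::'a) 1)" by auto
qed

lemma g_cont: "continuous_on UNIV (\<lambda>p::real \<times> 'a::euclidean_space. fst p * relu (inner (snd p) x))"
  unfolding relu_def by (intro continuous_intros)

lemma g_meas:
  assumes "sets M = sets (borel :: (real \<times> 'a::euclidean_space) measure)"
  shows "(\<lambda>p::real \<times> 'a. fst p * relu (inner (snd p) x)) \<in> borel_measurable M"
  using borel_measurable_continuous_onI[OF g_cont, of x] unfolding measurable_cong_sets[OF assms refl] .

lemma integrable_g:
  assumes "P2cone (\<mu> :: (real \<times> 'a::euclidean_space) measure)" "norm x = 1"
  shows "integrable \<mu> (\<lambda>p. fst p * relu (inner (snd p) x))"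
proof -
  have sets: "sets \<mu> = sets borel" and ps: "prob_space \<mu>"
    and fin: "(\<integral>\<^sup>+ p. ennreal ((fst p)^2) \<partial>\<mu>) < \<infinity>" using assms by (auto simp: P2cone_def)
  have m2: "(\<lambda>p::real \<times> 'a. (fst p)^2) \<in> borel_measurable \<mu>"
  proof -
    have "continuous_on UNIV (\<lambda>p::real \<times> 'a. (fst p)^2)" by (intro continuous_intros)
    then show ?thesis unfolding measurable_cong_sets[OF sets refl] by (rule borel_measurable_continuous_onI)
  qed
  have i2: "integrable \<mu> (\<lambda>p. (fst p)^2)"
  proof (rule integrableI_nn_integral_finite[OF m2])
    show "AE x in \<mu>. 0 \<le> (fst x)\<^sup>2" by simp
    show "(\<integral>\<^sup>+ p. ennreal ((fst p)^2) \<partial>\<mu>) = ennreal (enn2real (\<integral>\<^sup>+ p. ennreal ((fst p)^2) \<partial>\<mu>))"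
      using fin by (simp add: ennreal_enn2real less_top)
  qed
  interpret prob_space \<mu> by (rule ps)
  have i1: "integrable \<mu> (\<lambda>p. 1 + (fst p)^2)"
    using i2 by (intro Bochner_Integration.integrable_add) auto
  show ?thesis
  proof (rule Bochner_Integration.integrable_bound[OF i1 g_meas[OF sets]])
    show "AE p in \<mu>. norm (fst p * relu (inner (snd p) x)) \<le> norm (1 + (fst p)\<^sup>2)"
      using supp_AE[OF assms(1)]
    proof eventually_elim
      case (elim p)
      then have r: "fst p \<ge> 0" and t: "norm (snd p) = 1" by (auto simp: mem_Times_iff)
      have "relu (inner (snd p) x) \<le> 1"
        using Cauchy_Schwarz_ineq2[of "snd p" x] t assms(2) unfolding relu_def by auto
      moreover have "relu (inner (snd p) x) \<ge> 0" unfolding relu_def by simp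
      ultimately have "fst p * relu (inner (snd p) x) \<le> fst p" using r
        by (simp add: mult_left_le)
      moreover have "fst p \<le> 1 + (fst p)^2"
      proof -
        have "0 \<le> (fst p - 1/2)^2" by simp
        then show ?thesis by (simp add: power2_diff power2_eq_square algebra_simps)
      qed
      ultimately show ?case using r \<open>relu (inner (snd p) x) \<ge> 0\<close> by simp
    qed
  qed
qed

lemma fpos_eq:
  assumes "hproj_eq \<mu> \<nu>"
  shows "f_pos \<nu> x = (\<integral>p. fst p * relu (inner (snd p) x) \<partial>\<mu>)"
proof -
  have "continuous_on (sphere 0 1) (\<lambda>\<theta>. relu (inner \<theta> x))"
    unfolding relu_def by (intro continuous_intros)
  then show ?thesis using assms unfolding hproj_eq_def f_pos_def by blast
qed


lemma nb: "(a::real)\<^sup>2 \<le> d \<Longrightarrow> norm (a\<^sup>2) \<le> norm d"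
  by simp

lemma key:
  fixes \<nu>1 \<nu>2 :: "'a::euclidean_space measure"
  assumes P1: "P2cone \<mu>1" and P2: "P2cone \<mu>2" and h1: "hproj_eq \<mu>1 \<nu>1" and h2: "hproj_eq \<mu>2 \<nu>2"
    and cp: "\<pi> \<in> couplings \<mu>1 \<mu>2" and nx: "norm x = 1"
  shows "ennreal \<bar>f_pos \<nu>1 x - f_pos \<nu>2 x\<bar> \<le> ennsqrt (\<integral>\<^sup>+ z. ennreal (cone_dist_sq (fst z) (snd z)) \<partial>\<pi>)"
proof (cases "(\<integral>\<^sup>+ z. ennreal (cone_dist_sq (fst z) (snd z)) \<partial>\<pi>) = \<infinity>")
  case True
  then show ?thesis by (simp add: ennsqrt_def)
next
  case False
  define D where "D = (\<lambda>z::(real \<times> 'a) \<times> (real \<times> 'a). cone_dist_sq (fst z) (snd z))"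
  define g where "g = (\<lambda>p::real \<times> 'a. fst p * relu (inner (snd p) x))"
  define h where "h = (\<lambda>z. g (fst z) - g (snd z))"
  have sp: "sets \<pi> = sets borel" and ps: "prob_space \<pi>" and d1: "distr \<pi> borel fst = \<mu>1"
    and d2: "distr \<pi> borel snd = \<mu>2" using cp by (auto simp: couplings_def)
  interpret prob_space \<pi> by (rule ps)
  have mfst: "fst \<in> measurable \<pi> (borel :: (real \<times> 'a) measure)"
  proof -
    have "continuous_on UNIV (fst :: (real \<times> 'a) \<times> (real \<times> 'a) \<Rightarrow> real \<times> 'a)" by (intro continuous_intros)
    then show ?thesis unfolding measurable_cong_sets[OF sp refl] by (rule borel_measurable_continuous_onI)
  qed
  have msnd: "snd \<in> measurable \<pi> (borel :: (real \<times> 'a) measure)"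
  proof -
    have "continuous_on UNIV (snd :: (real \<times> 'a) \<times> (real \<times> 'a) \<Rightarrow> real \<times> 'a)" by (intro continuous_intros)
    then show ?thesis unfolding measurable_cong_sets[OF sp refl] by (rule borel_measurable_continuous_onI)
  qed
  have gm: "g \<in> borel_measurable borel" unfolding g_def by (rule g_meas) simp
  have e1: "f_pos \<nu>1 x = (\<integral>z. g (fst z) \<partial>\<pi>)"
    using fpos_eq[OF h1, of x] integral_distr[OF mfst gm] d1 unfolding g_def by simp
  have e2: "f_pos \<nu>2 x = (\<integral>z. g (snd z) \<partial>\<pi>)"
    using fpos_eq[OF h2, of x] integral_distr[OF msnd gm] d2 unfolding g_def by simp
  have i1: "integrable \<pi> (\<lambda>z. g (fst z))"
    using integrable_distr_eq[OF mfst gm] d1 integrable_g[OF P1 nx] unfolding g_def by simp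
  have i2: "integrable \<pi> (\<lambda>z. g (snd z))"
    using integrable_distr_eq[OF msnd gm] d2 integrable_g[OF P2 nx] unfolding g_def by simp
  have Sb: "{p \<in> space borel. p \<in> {0::real..} \<times> sphere (0::'a) 1} \<in> sets borel"
    by (simp add: closed_Times closed_atLeast closed_sphere borel_closed)
  have A1: "AE z in \<pi>. fst z \<in> {0..} \<times> sphere (0::'a) 1"
    using AE_distr_iff[OF mfst Sb] supp_AE[OF P1] d1 by metis
  have A2: "AE z in \<pi>. snd z \<in> {0..} \<times> sphere (0::'a) 1"
    using AE_distr_iff[OF msnd Sb] supp_AE[OF P2] d2 by metis
  have ih: "integrable \<pi> h" unfolding h_def using i1 i2 by simp
  have AEb: "AE z in \<pi>. (h z)\<^sup>2 \<le> D z"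
    using A1 A2
  proof eventually_elim
    case (elim z)
    then show ?case unfolding h_def g_def D_def
      using pw[of "fst (fst z)" "fst (snd z)" "snd (fst z)" "snd (snd z)" x] nx
      by (auto simp: mem_Times_iff)
  qed
  have Dm: "D \<in> borel_measurable \<pi>"
  proof -
    have "continuous_on UNIV D" unfolding D_def cone_dist_sq_def by (intro continuous_intros)
    then show ?thesis unfolding measurable_cong_sets[OF sp refl] by (rule borel_measurable_continuous_onI)
  qed
  have D0: "AE z in \<pi>. 0 \<le> D z" using AEb by eventually_elim (smt (verit) zero_le_power2)
  have Dint: "integrable \<pi> D"
  proof (rule integrableI_nn_integral_finite[OF Dm D0])
    show "(\<integral>\<^sup>+ z. ennreal (D z) \<partial>\<pi>) = ennreal (enn2real (\<integral>\<^sup>+ z. ennreal (D z) \<partial>\<pi>))"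
      using False unfolding D_def ennreal_enn2real_if by (simp only: infinity_ennreal_def if_False)
  qed
  have hm: "h \<in> borel_measurable \<pi>" using ih by (rule borel_measurable_integrable)
  have ih2: "integrable \<pi> (\<lambda>z. (h z)\<^sup>2)"
  proof (rule Bochner_Integration.integrable_bound[OF Dint])
    show "(\<lambda>z. (h z)\<^sup>2) \<in> borel_measurable \<pi>" using hm by (rule borel_measurable_power)
    show "AE z in \<pi>. norm ((h z)\<^sup>2) \<le> norm (D z)" using AEb by eventually_elim (rule nb)
  qed
  have iha: "integrable \<pi> (\<lambda>z. \<bar>h z\<bar>)" by (rule integrable_abs[OF ih])
  have iha2: "integrable \<pi> (\<lambda>z. (\<bar>h z\<bar>)\<^sup>2)" using ih2 by (simp only: power2_abs)
  have "0 \<le> variance (\<lambda>z. \<bar>h z\<bar>)" by (rule variance_positive)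
  then have cs: "(\<integral>z. \<bar>h z\<bar> \<partial>\<pi>)\<^sup>2 \<le> (\<integral>z. (h z)\<^sup>2 \<partial>\<pi>)"
  proof -
    have v: "variance (\<lambda>z. \<bar>h z\<bar>) = (\<integral>z. (\<bar>h z\<bar>)\<^sup>2 \<partial>\<pi>) - (\<integral>z. \<bar>h z\<bar> \<partial>\<pi>)\<^sup>2"
      by (rule variance_eq[OF iha iha2])
    have "(\<lambda>z. (\<bar>h z\<bar>)\<^sup>2) = (\<lambda>z. (h z)\<^sup>2)" by simp
    with v \<open>0 \<le> variance (\<lambda>z. \<bar>h z\<bar>)\<close> show ?thesis by simp
  qed
  have diff: "f_pos \<nu>1 x - f_pos \<nu>2 x = (\<integral>z. h z \<partial>\<pi>)"
    unfolding e1 e2 h_def using i1 i2 by simp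
  have "\<bar>\<integral>z. h z \<partial>\<pi>\<bar> \<le> (\<integral>z. \<bar>h z\<bar> \<partial>\<pi>)" by (rule integral_abs_bound)
  then have "(\<bar>\<integral>z. h z \<partial>\<pi>\<bar>)\<^sup>2 \<le> (\<integral>z. \<bar>h z\<bar> \<partial>\<pi>)\<^sup>2"
    by (intro power_mono) auto
  also have "\<dots> \<le> (\<integral>z. (h z)\<^sup>2 \<partial>\<pi>)" by (rule cs)
  also have "\<dots> \<le> (\<integral>z. D z \<partial>\<pi>)" using ih2 Dint AEb by (intro integral_mono_AE) auto
  also have "\<dots> = enn2real (\<integral>\<^sup>+ z. ennreal (D z) \<partial>\<pi>)" by (rule integral_eq_nn_integral[OF Dm D0])
  finally have "\<bar>f_pos \<nu>1 x - f_pos \<nu>2 x\<bar> \<le> sqrt (enn2real (\<integral>\<^sup>+ z. ennreal (D z) \<partial>\<pi>))"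
    unfolding diff by (intro real_le_rsqrt) simp
  then show ?thesis using False unfolding ennsqrt_def D_def by (simp add: ennreal_leI)
qed


lemma t1: "\<bar>(a::real) - b - (c - d)\<bar> \<le> \<bar>a - c\<bar> + \<bar>b - d\<bar>"
proof -
  have "a - b - (c - d) = (a - c) - (b - d)" by simp
  then show ?thesis using abs_triangle_ineq4[of "a - c" "b - d"] by simp
qed
lemma t2: "\<bar>x::real\<bar> \<le> \<bar>a\<bar> + \<bar>b\<bar> \<Longrightarrow> ennreal \<bar>x\<bar> \<le> ennreal \<bar>a\<bar> + ennreal \<bar>b\<bar>"
proof -
  assume h: "\<bar>x\<bar> \<le> \<bar>a\<bar> + \<bar>b\<bar>"
  have "ennreal \<bar>x\<bar> \<le> ennreal (\<bar>a\<bar> + \<bar>b\<bar>)" using h by (rule ennreal_leI)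
  also have "\<dots> = ennreal \<bar>a\<bar> + ennreal \<bar>b\<bar>" by (rule ennreal_plus) simp_all
  finally show ?thesis .
qed
lemma t3: "2 * (M::ennreal) \<le> 2 * ennreal (sqrt 2) * M"
proof -
  have "ennreal 1 \<le> ennreal (sqrt 2)" by (rule ennreal_leI) simp
  then have "2 * 1 \<le> 2 * ennreal (sqrt 2)" by (intro mult_left_mono) auto
  then have "2 \<le> 2 * ennreal (sqrt 2)" by simp
  then show ?thesis by (rule mult_right_mono) simp
qed

lemma bnd:
  fixes \<nu>1 \<nu>2 :: "'a::euclidean_space measure"
  assumes nx: "norm x = 1"
  shows "ennreal \<bar>f_pos \<nu>1 x - f_pos \<nu>2 x\<bar> \<le> W2tilde \<nu>1 \<nu>2"
  unfolding W2tilde_def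
proof (rule INF_greatest)
  fix mm assume "mm \<in> {(\<mu>1, \<mu>2). P2cone \<mu>1 \<and> P2cone \<mu>2 \<and> hproj_eq \<mu>1 \<nu>1 \<and> hproj_eq \<mu>2 \<nu>2}"
  then obtain \<mu>1 \<mu>2 where mm: "mm = (\<mu>1, \<mu>2)" and P1: "P2cone \<mu>1" and P2: "P2cone \<mu>2"
    and h1: "hproj_eq \<mu>1 \<nu>1" and h2: "hproj_eq \<mu>2 \<nu>2" by auto
  show "ennreal \<bar>f_pos \<nu>1 x - f_pos \<nu>2 x\<bar> \<le> W2 (fst mm) (snd mm)"
    unfolding mm W2_def fst_conv snd_conv
    by (rule INF_greatest) (rule key[OF P1 P2 h1 h2 _ nx])
qed

theorem mainTheorem13:
  fixes \<nu>p \<nu>m \<nu>p' \<nu>m' :: "'a::euclidean_space measure"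
  assumes "jordan_pair \<nu>p \<nu>m" and "jordan_pair \<nu>p' \<nu>m'"
  shows "(SUP x \<in> sphere (0::'a) 1. ennreal \<bar>f_signed \<nu>p \<nu>m x - f_signed \<nu>p' \<nu>m' x\<bar>)
           \<le> 2 * ennreal (sqrt 2) * max (W2tilde \<nu>p \<nu>p') (W2tilde \<nu>m \<nu>m')"
proof (rule SUP_least)
  fix x :: 'a assume "x \<in> sphere 0 1"
  then have nx: "norm x = 1" by simp
  let ?a = "f_pos \<nu>p x - f_pos \<nu>p' x" and ?b = "f_pos \<nu>m x - f_pos \<nu>m' x"
  let ?M = "max (W2tilde \<nu>p \<nu>p') (W2tilde \<nu>m \<nu>m')"
  have "\<bar>f_signed \<nu>p \<nu>m x - f_signed \<nu>p' \<nu>m' x\<bar> \<le> \<bar>?a\<bar> + \<bar>?b\<bar>"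
    unfolding f_signed_def by (rule t1)
  then have "ennreal \<bar>f_signed \<nu>p \<nu>m x - f_signed \<nu>p' \<nu>m' x\<bar> \<le> ennreal \<bar>?a\<bar> + ennreal \<bar>?b\<bar>"
    by (rule t2)
  also have "\<dots> \<le> ?M + ?M"
    using bnd[OF nx, of \<nu>p \<nu>p'] bnd[OF nx, of \<nu>m \<nu>m'] by (intro add_mono) (auto intro: order_trans[OF _ max.cobounded1] order_trans[OF _ max.cobounded2])
  also have "\<dots> = 2 * ?M" by (rule mult_2[symmetric])
  also have "\<dots> \<le> 2 * ennreal (sqrt 2) * ?M" by (rule t3)
  finally show "ennreal \<bar>f_signed \<nu>p \<nu>m x - f_signed \<nu>p' \<nu>m' x\<bar> \<le> 2 * ennreal (sqrt 2) * ?M" .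
qed

end
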